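(* Let $\mathcal H$ be a real Hilbert space, let $\varepsilon\in\left]0,1/2\right[$, and let $x_0\in\mathcal H$. For every $n\in\mathbb N$, let $\alpha_{1,n}\in\left]0,1/(1+\varepsilon)\right]$, let $\alpha_{2,n}\in\left]0,1/(1+\varepsilon)\right]$, let $T_{1,n}\colon\mathcal H\to\mathcal H$ be $\alpha_{1,n}$-averaged, let $T_{2,n}\colon\mathcal H\to\mathcal H$ be $\alpha_{2,n}$-averaged, let $e_{1,n}\in\mathcal H$, and let $e_{2,n}\in\mathcal H$. In addition, for every $n\in\mathbb N$, let $$\lambda_n\in\left[\varepsilon,\frac{(1-\varepsilon)(1+\varepsilon\phi_n)}{\phi_n}\right],\quad\text{where}\quad\phi_n=\frac{\alpha_{1,n}+\alpha_{2,n}-2\alpha_{1,n}\alpha_{2,n}}{1-\alpha_{1,n}\alpha_{2,n}},$$ and set $x_{n+1}=x_n+\lambda_n\big(T_{1,n}(T_{2,n}x_n+e_{2,n})+e_{1,n}-x_n\big)$. Suppose that $S=\bigcap_{n\in\mathbb N}\mathrm{Fix}(T_{1,n}T_{2,n})\neq\varnothing$, $\sum_{n\in\mathbb N}\lambda_n\|e_{1,n}\|<+\infty$, and $\sum_{n\in\mathbb N}\lambda_n\|e_{2,n}\|<+\infty$. Then: (i) for every $x\in S$, $\sum_{n\in\mathbb N}\|T_{1,n}T_{2,n}x_n-T_{2,n}x_n+T_{2,n}x-x\|^2<+\infty$; (ii) for every $x\in S$, $\sum_{n\in\mathbb N}\|T_{2,n}x_n-x_n-T_{2,n}x+x\|^2<+\infty$;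 (iii) $\sum_{n\in\mathbb N}\|T_{1,n}T_{2,n}x_n-x_n\|^2<+\infty$; (iv) if every weak sequential cluster point of $(x_n)_{n\in\mathbb N}$ is in $S$, then $(x_n)_{n\in\mathbb N}$ converges weakly to a point in $S$, and the convergence is strong if $\mathrm{int}\,S\neq\varnothing$; (v) if $\liminf_{n\to\infty} d_S(x_n)=0$, then $(x_n)_{n\in\mathbb N}$ converges strongly to a point in $S$.
   Context: An operator $T\colon\mathcal H\to\mathcal H$ is nonexpansive if it is 1-Lipschitz; for $\alpha\in\left]0,1\right[$, a nonexpansive $T$ is $\alpha$-averaged if there exists a nonexpansive $R\colon\mathcal H\to\mathcal H$ with $T=(1-\alpha)\mathrm{Id}+\alpha R$. $\mathrm{Fix}$ denotes the fixed point set, $d_S$ the distance function to $S$, $\mathrm{int}\,S$ the interior of $S$. *)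

theory Defs
  imports "HOL-Analysis.Analysis"
begin

definition nonexpansive :: "('a::real_normed_vector \<Rightarrow> 'a) \<Rightarrow> bool" where
  "nonexpansive T \<longleftrightarrow> (\<forall>x y. norm (T x - T y) \<le> norm (x - y))"

definition averaged :: "real \<Rightarrow> ('a::real_normed_vector \<Rightarrow> 'a) \<Rightarrow> bool" where
  "averaged \<alpha> T \<longleftrightarrow> 0 < \<alpha> \<and> \<alpha> < 1 \<and> nonexpansive T \<and>
     (\<exists>R. nonexpansive R \<and> T = (\<lambda>x. (1 - \<alpha>) *\<^sub>R x + \<alpha> *\<^sub>R R x))"

definition Fix :: "('a \<Rightarrow> 'a) \<Rightarrow> 'a set" where
  "Fix T = {x. T x = x}"

definition weakly_converges :: "(nat \<Rightarrow> 'a::real_inner) \<Rightarrow> 'a \<Rightarrow> bool" where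
  "weakly_converges x l \<longleftrightarrow> (\<forall>y. ((\<lambda>n. inner (x n) y) \<longlongrightarrow> inner l y) sequentially)"

definition weak_seq_cluster_point :: "(nat \<Rightarrow> 'a::real_inner) \<Rightarrow> 'a \<Rightarrow> bool" where
  "weak_seq_cluster_point x z \<longleftrightarrow> (\<exists>r. strict_mono r \<and> weakly_converges (x \<circ> r) z)"

end

theory Submission
  imports Defs "HOL-Library.Diagonal_Subsequence"
begin

lemma parallelogram_mid:
  fixes y a b :: "'a::real_inner"
  shows "(norm (a - b))^2 + 4 * (norm (y - (1/2) *\<^sub>R (a + b)))^2 = 2 * (norm (y - a))^2 + 2 * (norm (y - b))^2"
  unfolding power2_norm_eq_inner
  by (simp add: inner_diff_left inner_diff_right inner_add_left inner_add_right inner_commute algebra_simps)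

lemma proj_subspace:
  fixes C :: "'a::{real_inner,complete_space} set"
  assumes sub: "subspace C" and cl: "closed C"
  shows "\<exists>p\<in>C. \<forall>m\<in>C. inner (y - p) m = 0"
proof -
  define g where "g c = (norm (y - c))^2" for c
  define d where "d = Inf (g ` C)"
  have C0: "0 \<in> C" using sub subspace_0 by blast
  have bdd: "bdd_below (g ` C)" by (auto simp: g_def intro!: bdd_belowI[of _ 0])
  have dle: "d \<le> g c" if "c \<in> C" for c using cInf_lower[OF _ bdd] that d_def by auto
  have "\<exists>c\<in>C. g c < d + 1/Suc n" for n
  proof -
    have "Inf (g`C) < d + 1/Suc n" by (simp add: d_def)
    then show ?thesis using C0 bdd by (subst (asm) cInf_less_iff) auto
  qed
  then obtain c where c: "\<And>n. c n \<in> C" "\<And>n. g (c n) < d + 1/Suc n" by metis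
  have par: "(norm (a - b))^2 \<le> 2 * g a + 2 * g b - 4 * d" if "a \<in> C" "b \<in> C" for a b
  proof -
    have "(1/2) *\<^sub>R (a + b) \<in> C" using that sub by (simp add: subspace_add subspace_scale)
    then have "d \<le> g ((1/2) *\<^sub>R (a + b))" by (rule dle)
    then show ?thesis using parallelogram_mid[of a b y] by (simp add: g_def)
  qed
  have "Cauchy c"
  proof (rule metric_CauchyI)
    fix e :: real assume e: "e > 0"
    obtain N :: nat where N: "4 / e^2 < N" using reals_Archimedean2 by blast
    have "N > 0" using N e by (smt (verit) of_nat_0_less_iff zero_less_divide_iff zero_less_power)
    show "\<exists>M. \<forall>m\<ge>M. \<forall>n\<ge>M. dist (c m) (c n) < e"
    proof (intro exI allI impI)
      fix m n assume mn: "N \<le> m" "N \<le> n"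
      have "(norm (c m - c n))^2 \<le> 2 * g (c m) + 2 * g (c n) - 4 * d" using par c by blast
      also have "\<dots> < 2 * (1/Suc m) + 2 * (1/Suc n)" using c(2)[of m] c(2)[of n] by linarith
      also have "\<dots> \<le> 4 / N"
      proof -
        have "1/Suc m \<le> 1/N" "1/Suc n \<le> 1/N" using mn \<open>N>0\<close> by (auto simp: divide_simps)
        then show ?thesis by simp
      qed
      also have "\<dots> < e^2" using N e \<open>N>0\<close> by (simp add: divide_simps mult.commute)
      finally have "(norm (c m - c n))^2 < e^2" .
      then show "dist (c m) (c n) < e" using e by (simp add: dist_norm power_less_imp_less_base)
    qed
  qed
  then obtain p where p: "c \<longlonglongrightarrow> p" using convergent_def Cauchy_convergent_iff by blast
  have pC: "p \<in> C" using closed_sequentially[OF cl c(1) p] .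
  have gp: "g p \<le> d"
  proof -
    have l1: "(\<lambda>n. g (c n)) \<longlonglongrightarrow> g p" unfolding g_def by (intro tendsto_intros p)
    have l2: "(\<lambda>n. d + 1/Suc n) \<longlonglongrightarrow> d + 0"
      by (intro tendsto_intros LIMSEQ_inverse_real_of_nat[unfolded inverse_eq_divide])
    have "g p \<le> d + 0"
      by (rule tendsto_le[OF trivial_limit_sequentially l2 l1]) (intro always_eventually allI less_imp_le c(2))
    then show ?thesis by simp
  qed
  have "inner (y - p) m = 0" if m: "m \<in> C" for m
  proof -
    define w where "w = inner (y - p) m"
    define a where "a = (norm m)^2"
    define t where "t = w / (a + 1)"
    have a0: "a \<ge> 0" by (simp add: a_def)
    have "p + t *\<^sub>R m \<in> C" using sub pC m by (simp add: subspace_add subspace_scale)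
    then have "g p \<le> g (p + t *\<^sub>R m)" using dle gp by fastforce
    moreover have "g (p + t *\<^sub>R m) = g p - 2 * t * w + t^2 * a"
      unfolding g_def w_def a_def power2_norm_eq_inner
      by (simp add: inner_diff_left inner_diff_right inner_add_left inner_add_right inner_commute algebra_simps power2_eq_square)
    ultimately have "0 \<le> - 2 * t * w + t^2 * a" by simp
    moreover have "- 2 * t * w + t^2 * a = - (w^2 * (a+2)) / (a+1)^2"
    proof -
      have "a + 1 \<noteq> 0" using a0 by simp
      then show ?thesis unfolding t_def by (simp add: divide_simps power2_eq_square) (simp add: algebra_simps)
    qed
    ultimately have a2: "0 \<le> - (w^2 * (a+2)) / (a+1)^2" by simp
    have pp: "(a+1)^2 > 0" using a0 by simp
    have "0 \<le> (- (w^2 * (a+2)) / (a+1)^2) * (a+1)^2" by (rule mult_nonneg_nonneg[OF a2 less_imp_le[OF pp]])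
    also have "\<dots> = - (w^2 * (a+2))" using pp by simp
    finally have "w^2 * (a+2) \<le> 0" by simp
    moreover have "w^2 * (a + 2) \<ge> 0" using a0 by simp
    ultimately have "w^2 * (a + 2) = 0" by linarith
    then have "w^2 = 0" using a0 by simp
    then show ?thesis unfolding w_def by simp
  qed
  then show ?thesis using pC by blast
qed

lemma riesz:
  fixes f :: "'a::{real_inner,complete_space} \<Rightarrow> real"
  assumes "bounded_linear f"
  shows "\<exists>z. \<forall>y. f y = inner z y"
proof (cases "\<forall>y. f y = 0")
  case True then show ?thesis by (intro exI[of _ 0]) simp
next
  case False
  then obtain y0 where y0: "f y0 \<noteq> 0" by blast
  interpret bl: bounded_linear f by fact
  define N where "N = {y. f y = 0}"
  have subN: "subspace N" unfolding N_def subspace_def by (auto simp: bl.add bl.scale bl.zero)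
  have clN: "closed N" unfolding N_def
    by (intro closed_Collect_eq continuous_on_const) (simp add: bl.continuous_on continuous_on_id)
  obtain p where p: "p \<in> N" "\<And>m. m \<in> N \<Longrightarrow> inner (y0 - p) m = 0"
    using proj_subspace[OF subN clN, of y0] by blast
  define w where "w = y0 - p"
  have fw: "f w = f y0" using p(1) by (simp add: w_def bl.diff N_def)
  have w0: "w \<noteq> 0" using fw y0 by auto
  have nw: "inner w w > 0" using w0 by simp
  have key: "inner w y = f y / f w * inner w w" for y
  proof -
    have "y - (f y / f w) *\<^sub>R w \<in> N" using fw y0 by (simp add: N_def bl.diff bl.scale)
    then have "inner w (y - (f y / f w) *\<^sub>R w) = 0" using p(2) by (simp add: w_def)
    then show ?thesis by (simp add: inner_diff_right)
  qed
  show ?thesis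
  proof (intro exI allI)
    fix y
    show "f y = inner ((f w / inner w w) *\<^sub>R w) y"
      using key[of y] nw fw y0 by (simp add: field_simps)
  qed
qed

lemma subseq_inner_convergent:
  fixes x :: "nat \<Rightarrow> 'a::real_inner"
  assumes B: "\<And>n. norm (x n) \<le> B"
  shows "\<exists>r. strict_mono r \<and> (\<forall>k. convergent (\<lambda>n. inner (x (r n)) (x k)))"
proof -
  define P where "P k s \<longleftrightarrow> convergent (\<lambda>n. inner (x (s n)) (x k))" for k and s :: "nat \<Rightarrow> nat"
  interpret subseqs P
  proof
    fix k and s :: "nat \<Rightarrow> nat" assume "strict_mono s"
    have bnd: "norm (inner (x i) (x k)) \<le> B * B" for i
    proof -
      have "norm (inner (x i) (x k)) \<le> norm (x i) * norm (x k)"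
        unfolding real_norm_def by (rule Cauchy_Schwarz_ineq2)
      also have "\<dots> \<le> B * B" using B norm_ge_zero order_trans by (intro mult_mono) blast+
      finally show ?thesis .
    qed
    obtain f where f: "strict_mono f" "monoseq (\<lambda>n. inner (x (s (f n))) (x k))"
      using seq_monosub[of "\<lambda>n. inner (x (s n)) (x k)"] by auto
    have "Bseq (\<lambda>n. inner (x (s (f n))) (x k))"
      by (rule BseqI'[of _ "B * B"]) (rule bnd)
    then have "convergent (\<lambda>n. inner (x (s (f n))) (x k))" using f(2) Bseq_monoseq_convergent by blast
    then show "\<exists>r'. strict_mono r' \<and> P k (s \<circ> r')" using f(1) by (auto simp: P_def o_def)
  qed
  have "P k diagseq" for k
  proof -
    have "P k (diagseq \<circ> ((+) (Suc k)))"
    proof (rule diagseq_holds)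
      fix r s n assume r: "strict_mono (r::nat\<Rightarrow>nat)" and "P n s"
      then have "convergent ((\<lambda>m. inner (x (s m)) (x n)) \<circ> r)"
        unfolding P_def by (intro convergent_subseq_convergent)
      then show "P n (s \<circ> r)" unfolding P_def by (simp add: o_def)
    qed
    then have "convergent (\<lambda>n. inner (x (diagseq (n + Suc k))) (x k))"
      unfolding P_def o_def by (simp only: add.commute)
    then show ?thesis unfolding P_def
      by (subst convergent_ignore_initial_segment[symmetric, of _ "Suc k"]) simp
  qed
  then show ?thesis using subseq_diagseq unfolding P_def by blast
qed

lemma inner_bound:
  fixes a b :: "'a::real_inner"
  assumes "norm a \<le> B"
  shows "\<bar>inner a b\<bar> \<le> B * norm b"
proof -
  have "\<bar>inner a b\<bar> \<le> norm a * norm b" by (rule Cauchy_Schwarz_ineq2)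
  also have "\<dots> \<le> B * norm b" using assms by (intro mult_right_mono) auto
  finally show ?thesis .
qed

lemma abs3: fixes P Q a b c k e :: real
  shows "P - Q = a + b + c \<Longrightarrow> \<bar>a\<bar> \<le> k \<Longrightarrow> \<bar>c\<bar> \<le> k \<Longrightarrow> \<bar>b\<bar> < e/3 \<Longrightarrow> k < e/3 \<Longrightarrow> \<bar>P - Q\<bar> < e"
  by linarith

lemma weak_seq_compact:
  fixes x :: "nat \<Rightarrow> 'a::{real_inner,complete_space}"
  assumes B: "\<And>n. norm (x n) \<le> B"
  shows "\<exists>r z. strict_mono r \<and> weakly_converges (x \<circ> r) z"
proof -
  obtain r where r: "strict_mono r" "\<And>k. convergent (\<lambda>n. inner (x (r n)) (x k))"
    using subseq_inner_convergent[of x B] B by blast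
  define C where "C = {y. convergent (\<lambda>n. inner (x (r n)) y)}"
  have B0: "B \<ge> 0" using B[of 0] norm_ge_zero order_trans by blast
  have c1: "0 \<in> C" by (simp add: C_def convergent_const)
  have c2: "a + b \<in> C" if "a \<in> C" "b \<in> C" for a b
    using that by (simp add: C_def inner_add_right convergent_add)
  have c3: "c *\<^sub>R a \<in> C" if aC: "a \<in> C" for c a
  proof -
    obtain l where "(\<lambda>n. inner (x (r n)) a) \<longlonglongrightarrow> l" using aC by (auto simp: C_def convergent_def)
    then have "(\<lambda>n. c * inner (x (r n)) a) \<longlonglongrightarrow> c * l" by (intro tendsto_mult_left)
    then show ?thesis by (auto simp: C_def convergent_def)
  qed
  have subC: "subspace C" unfolding subspace_def using c1 c2 c3 by blast
  have clC: "closed C" unfolding closed_sequential_limits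
  proof (intro allI impI, elim conjE)
    fix ys p assume ys: "\<forall>n. ys n \<in> C" and lim: "ys \<longlonglongrightarrow> p"
    have "Cauchy (\<lambda>n. inner (x (r n)) p)"
    proof (rule metric_CauchyI)
      fix e :: real assume e: "e > 0"
      define d where "d = e / (3 * (B + 1))"
      have d: "d > 0" using e B0 by (simp add: d_def)
      obtain j where j: "dist (ys j) p < d" using lim d by (auto dest: metric_LIMSEQ_D)
      have "Cauchy (\<lambda>n. inner (x (r n)) (ys j))" using ys by (simp add: C_def Cauchy_convergent_iff)
      then obtain N where N: "\<And>m n. m \<ge> N \<Longrightarrow> n \<ge> N \<Longrightarrow> dist (inner (x (r m)) (ys j)) (inner (x (r n)) (ys j)) < e/3"
        using e by (meson metric_CauchyD zero_less_divide_iff zero_less_numeral)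
      have Bd: "B * d < e / 3" using B0 e by (simp add: d_def field_simps)
      show "\<exists>M. \<forall>m\<ge>M. \<forall>n\<ge>M. dist (inner (x (r m)) p) (inner (x (r n)) p) < e"
      proof (intro exI allI impI)
        fix m n assume mn: "N \<le> m" "N \<le> n"
        have nd: "norm (p - ys j) \<le> d" "norm (ys j - p) \<le> d" using j by (auto simp: dist_norm norm_minus_commute)
        have 1: "\<bar>inner (x (r m)) (p - ys j)\<bar> \<le> B * d"
          using inner_bound[OF B, of "r m" "p - ys j"] nd B0 mult_left_mono order_trans by blast
        have 2: "\<bar>inner (x (r n)) (ys j - p)\<bar> \<le> B * d"
          using inner_bound[OF B, of "r n" "ys j - p"] nd B0 mult_left_mono order_trans by blast
        have 3: "\<bar>inner (x (r m)) (ys j) - inner (x (r n)) (ys j)\<bar> < e/3" using N[OF mn] by (simp add: dist_real_def)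
        have "inner (x (r m)) p - inner (x (r n)) p = inner (x (r m)) (p - ys j) + (inner (x (r m)) (ys j) - inner (x (r n)) (ys j)) + inner (x (r n)) (ys j - p)"
          by (simp add: inner_diff_right)
        then show "dist (inner (x (r m)) p) (inner (x (r n)) p) < e"
          using abs3[OF _ 1 2 3 Bd] unfolding dist_real_def by blast
      qed
    qed
    then show "p \<in> C" by (simp add: C_def Cauchy_convergent_iff)
  qed
  have allC: "y \<in> C" for y
  proof -
    obtain p where p: "p \<in> C" "\<And>m. m \<in> C \<Longrightarrow> inner (y - p) m = 0"
      using proj_subspace[OF subC clC, of y] by blast
    have "inner (x (r n)) y = inner (x (r n)) p" for n
    proof -
      have "x (r n) \<in> C" using r(2) by (simp add: C_def)
      then have "inner (y - p) (x (r n)) = 0" by (rule p(2))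
      then show ?thesis by (simp add: inner_diff_left inner_commute)
    qed
    then show ?thesis using p(1) by (simp add: C_def)
  qed
  define f where "f y = lim (\<lambda>n. inner (x (r n)) y)" for y
  have ft: "(\<lambda>n. inner (x (r n)) y) \<longlonglongrightarrow> f y" for y
    using allC[of y] unfolding f_def C_def by (simp add: convergent_LIMSEQ_iff)
  have "bounded_linear f"
  proof (rule bounded_linear_intro[where K=B])
    fix a b
    have "(\<lambda>n. inner (x (r n)) (a + b)) \<longlonglongrightarrow> f a + f b"
      unfolding inner_add_right by (intro tendsto_add ft)
    then show "f (a + b) = f a + f b" using ft LIMSEQ_unique by blast
  next
    fix c :: real and a
    have "(\<lambda>n. inner (x (r n)) (c *\<^sub>R a)) \<longlonglongrightarrow> c *\<^sub>R f a"
      unfolding inner_scaleR_right by (simp add: tendsto_mult_left ft)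
    then show "f (c *\<^sub>R a) = c *\<^sub>R f a" using ft LIMSEQ_unique by blast
  next
    fix a
    have "\<bar>f a\<bar> \<le> B * norm a"
      by (rule tendsto_le[OF trivial_limit_sequentially tendsto_const tendsto_rabs[OF ft]])
         (intro always_eventually allI inner_bound B)
    then show "norm (f a) \<le> norm a * B" by (simp add: mult.commute)
  qed
  then obtain z where z: "\<And>y. f y = inner z y" using riesz by blast
  have "weakly_converges (x \<circ> r) z"
    unfolding weakly_converges_def using ft z by (simp add: o_def)
  then show ?thesis using r(1) by blast
qed

lemma qf_iter:
  fixes a \<delta> :: "nat \<Rightarrow> real"
  assumes step: "\<And>n. a (Suc n) \<le> a n + \<delta> n"
  shows "n \<le> m \<Longrightarrow> a m \<le> a n + (\<Sum>k<m. \<delta> k) - (\<Sum>k<n. \<delta> k)"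
proof (induction m)
  case 0 then show ?case by simp
next
  case (Suc m)
  show ?case
  proof (cases "n = Suc m")
    case True then show ?thesis by simp
  next
    case False
    then have "n \<le> m" using Suc.prems by simp
    then show ?thesis using Suc.IH step[of m] by simp
  qed
qed

lemma qf_convergent:
  fixes a \<delta> :: "nat \<Rightarrow> real"
  assumes step: "\<And>n. a (Suc n) \<le> a n + \<delta> n"
    and a0: "\<And>n. 0 \<le> a n" and d0: "\<And>n. 0 \<le> \<delta> n" and sd: "summable \<delta>"
  shows "convergent a"
proof -
  define P where "P n = (\<Sum>k<n. \<delta> k)" for n
  define b where "b n = a n - P n" for n
  have "b m \<le> b n" if "n \<le> m" for n m
    using qf_iter[of a \<delta>, OF step, of n m] that by (simp add: b_def P_def)
  then have "antimono_on UNIV b" by (simp add: monotone_on_def)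
  moreover have "- suminf \<delta> \<le> b i" for i
  proof -
    have "P i \<le> suminf \<delta>" unfolding P_def using sd d0 by (intro sum_le_suminf) auto
    then show ?thesis using a0[of i] by (simp add: b_def)
  qed
  ultimately obtain L where L: "b \<longlonglongrightarrow> L" using decseq_convergent by blast
  have "P \<longlonglongrightarrow> suminf \<delta>" unfolding P_def using summable_LIMSEQ[OF sd] by simp
  then have "(\<lambda>n. b n + P n) \<longlonglongrightarrow> L + suminf \<delta>" by (intro tendsto_add L)
  then show ?thesis by (auto simp: b_def convergent_def)
qed

lemma weak_limit_unique:
  fixes x :: "nat \<Rightarrow> 'a::real_inner"
  assumes "weakly_converges x a" "weakly_converges x b"
  shows "a = b"
proof -
  have "(\<lambda>n. inner (x n) (a - b)) \<longlonglongrightarrow> inner a (a - b)"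
       "(\<lambda>n. inner (x n) (a - b)) \<longlonglongrightarrow> inner b (a - b)"
    using assms unfolding weakly_converges_def by auto
  then have "inner a (a - b) = inner b (a - b)" using LIMSEQ_unique by blast
  then have "inner (a - b) (a - b) = 0" by (simp add: inner_diff_left)
  then show ?thesis by simp
qed

lemma strong_imp_weak:
  fixes x :: "nat \<Rightarrow> 'a::real_inner"
  assumes "x \<longlonglongrightarrow> a"
  shows "weakly_converges x a"
  unfolding weakly_converges_def using tendsto_inner[OF assms tendsto_const] by blast

lemma weakly_converges_subseq:
  assumes "weakly_converges x a" "strict_mono r"
  shows "weakly_converges (x \<circ> r) a"
  unfolding weakly_converges_def
proof
  fix y
  have "(\<lambda>n. inner (x n) y) \<longlonglongrightarrow> inner a y" using assms(1) unfolding weakly_converges_def by blast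
  from LIMSEQ_subseq_LIMSEQ[OF this assms(2)] show "(\<lambda>n. inner ((x \<circ> r) n) y) \<longlonglongrightarrow> inner a y"
    by (simp add: o_def)
qed

lemma not_tendsto_subseq:
  fixes X :: "nat \<Rightarrow> real"
  assumes "\<not> X \<longlonglongrightarrow> L"
  shows "\<exists>e>0. \<exists>s::nat\<Rightarrow>nat. strict_mono s \<and> (\<forall>n. e \<le> \<bar>X (s n) - L\<bar>)"
proof -
  obtain e where e: "e > 0" "\<not> eventually (\<lambda>n. \<bar>X n - L\<bar> < e) sequentially"
    using assms unfolding tendsto_iff dist_real_def by auto
  then have "frequently (\<lambda>n. e \<le> \<bar>X n - L\<bar>) sequentially"
    by (simp add: not_eventually not_less)
  then have "infinite {n. e \<le> \<bar>X n - L\<bar>}"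
    by (simp add: frequently_cofinite[symmetric] cofinite_eq_sequentially)
  then obtain s :: "nat \<Rightarrow> nat" where "strict_mono s" "\<And>n. s n \<in> {n. e \<le> \<bar>X n - L\<bar>}"
    using infinite_enumerate by blast
  then have "strict_mono s \<and> (\<forall>n. e \<le> \<bar>X (s n) - L\<bar>)" by simp
  then have ex: "\<exists>s::nat\<Rightarrow>nat. strict_mono s \<and> (\<forall>n. e \<le> \<bar>X (s n) - L\<bar>)" by blast
  show ?thesis using e(1) ex by blast
qed

lemma opial:
  fixes x :: "nat \<Rightarrow> 'a::{real_inner,complete_space}"
  assumes B: "\<And>n. norm (x n) \<le> B"
    and conv: "\<And>z. z \<in> S \<Longrightarrow> convergent (\<lambda>n. norm (x n - z))"
    and clus: "\<And>z. weak_seq_cluster_point x z \<Longrightarrow> z \<in> S"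
  shows "\<exists>z\<in>S. weakly_converges x z"
proof -
  obtain r z1 where r: "strict_mono r" "weakly_converges (x \<circ> r) z1"
    using weak_seq_compact[of x B] B by blast
  have z1S: "z1 \<in> S" using r clus weak_seq_cluster_point_def by blast
  have key: "z1 = z2" if z2S: "z2 \<in> S" and s: "strict_mono s" "weakly_converges (x \<circ> s) z2" for z2 s
  proof -
    have c1: "convergent (\<lambda>n. (norm (x n - z1))^2)" using conv[OF z1S]
      by (auto simp: convergent_def intro: tendsto_intros)
    have c2: "convergent (\<lambda>n. (norm (x n - z2))^2)" using conv[OF z2S]
      by (auto simp: convergent_def intro: tendsto_intros)
    have eq: "inner (x n) (z1 - z2) = ((norm z1)^2 - (norm z2)^2 - ((norm (x n - z1))^2 - (norm (x n - z2))^2)) / 2" for n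
      unfolding power2_norm_eq_inner
      by (simp add: inner_diff_left inner_diff_right inner_commute algebra_simps)
    obtain L1 L2 where "(\<lambda>n. (norm (x n - z1))^2) \<longlonglongrightarrow> L1" "(\<lambda>n. (norm (x n - z2))^2) \<longlonglongrightarrow> L2"
      using c1 c2 by (auto simp: convergent_def)
    then have "(\<lambda>n. inner (x n) (z1 - z2)) \<longlonglongrightarrow> ((norm z1)^2 - (norm z2)^2 - (L1 - L2)) / 2"
      unfolding eq by (intro tendsto_intros) simp_all
    then have "convergent (\<lambda>n. inner (x n) (z1 - z2))" by (auto simp: convergent_def)
    then obtain L where L: "(\<lambda>n. inner (x n) (z1 - z2)) \<longlonglongrightarrow> L" by (auto simp: convergent_def)
    have "((\<lambda>n. inner (x n) (z1 - z2)) \<circ> r) \<longlonglongrightarrow> L" by (rule LIMSEQ_subseq_LIMSEQ[OF L r(1)])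
    moreover have "((\<lambda>n. inner (x n) (z1 - z2)) \<circ> r) \<longlonglongrightarrow> inner z1 (z1 - z2)"
      using r(2) unfolding weakly_converges_def by (simp add: o_def)
    ultimately have 1: "L = inner z1 (z1 - z2)" using LIMSEQ_unique by blast
    have "((\<lambda>n. inner (x n) (z1 - z2)) \<circ> s) \<longlonglongrightarrow> L" by (rule LIMSEQ_subseq_LIMSEQ[OF L s(1)])
    moreover have "((\<lambda>n. inner (x n) (z1 - z2)) \<circ> s) \<longlonglongrightarrow> inner z2 (z1 - z2)"
      using s(2) unfolding weakly_converges_def by (simp add: o_def)
    ultimately have 2: "L = inner z2 (z1 - z2)" using LIMSEQ_unique by blast
    have "inner (z1 - z2) (z1 - z2) = 0" using 1 2 by (simp add: inner_diff_left)
    then show ?thesis by simp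
  qed
  have "weakly_converges x z1"
    unfolding weakly_converges_def
  proof (rule allI, rule ccontr)
    fix y assume "\<not> (\<lambda>n. inner (x n) y) \<longlonglongrightarrow> inner z1 y"
    then obtain e and s :: "nat \<Rightarrow> nat" where e: "e > 0" "strict_mono s" "\<And>n. e \<le> \<bar>inner (x (s n)) y - inner z1 y\<bar>"
      using not_tendsto_subseq by blast
    obtain r2 z2 where r2: "strict_mono r2" "weakly_converges ((x \<circ> s) \<circ> r2) z2"
      using weak_seq_compact[of "x \<circ> s" B] B by auto
    have sm: "strict_mono (s \<circ> r2)" using e(2) r2(1) by (rule strict_mono_o)
    have wz2: "weakly_converges (x \<circ> (s \<circ> r2)) z2" using r2(2) by (simp add: o_assoc)
    have z2S: "z2 \<in> S" using clus sm wz2 weak_seq_cluster_point_def by blast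
    have "(\<lambda>n. \<bar>inner (x (s (r2 n))) y - inner z1 y\<bar>) \<longlonglongrightarrow> \<bar>inner z2 y - inner z1 y\<bar>"
    proof -
      have "(\<lambda>n. inner (x (s (r2 n))) y) \<longlonglongrightarrow> inner z2 y"
        using wz2 unfolding weakly_converges_def by (simp add: o_def)
      then show ?thesis by (intro tendsto_rabs tendsto_diff tendsto_const)
    qed
    then have "e \<le> \<bar>inner z2 y - inner z1 y\<bar>"
      by (rule tendsto_le[OF trivial_limit_sequentially _ tendsto_const]) (intro always_eventually allI e(3))
    moreover have "z1 = z2" using key[OF z2S sm wz2] .
    ultimately show False using e(1) by simp
  qed
  then show ?thesis by (rule bexI[OF _ z1S])
qed

lemma norm_sub_scale_sq:
  fixes w u :: "'a::real_inner"
  shows "(norm (w - h *\<^sub>R u))^2 = (norm w)^2 - 2 * h * inner w u + h^2 * (norm u)^2"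
  unfolding power2_norm_eq_inner
  by (simp add: inner_diff_left inner_diff_right inner_commute algebra_simps power2_eq_square)

lemma summable_le_suminf_single:
  fixes \<delta> :: "nat \<Rightarrow> real"
  assumes "summable \<delta>" "\<And>n. 0 \<le> \<delta> n"
  shows "\<delta> n \<le> suminf \<delta>"
  using sum_le_suminf[OF assms(1), of "{n}"] assms(2) by simp

lemma convergent_bounded_real:
  fixes a :: "nat \<Rightarrow> real"
  assumes "convergent a"
  shows "\<exists>A. \<forall>n. a n \<le> A"
proof -
  have "Bseq a" using assms convergent_imp_Bseq by blast
  then obtain K where "\<And>n. norm (a n) \<le> K" by (auto simp: Bseq_def)
  then show ?thesis by (metis abs_le_D1 real_norm_def)
qed

lemma summable_diff_convergent:
  fixes x :: "nat \<Rightarrow> 'a::{real_normed_vector,complete_space}"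
  assumes "summable (\<lambda>n. norm (x (Suc n) - x n))"
  shows "convergent x"
proof -
  have cs: "\<forall>e>0. \<exists>N. \<forall>m\<ge>N. \<forall>n. norm (sum (\<lambda>n. norm (x (Suc n) - x n)) {m..<n}) < e"
    using assms summable_Cauchy by blast
  have le: "dist (x n) (x m) \<le> norm (sum (\<lambda>n. norm (x (Suc n) - x n)) {m..<n})" if "m \<le> n" for m n
  proof -
    have "dist (x n) (x m) = norm (\<Sum>i = m..<n. x (Suc i) - x i)"
      using sum_Suc_diff'[OF that, of x] by (simp add: dist_norm)
    also have "\<dots> \<le> (\<Sum>i = m..<n. norm (x (Suc i) - x i))" by (rule norm_sum)
    also have "\<dots> \<le> norm (\<Sum>i = m..<n. norm (x (Suc i) - x i))" by simp
    finally show ?thesis .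
  qed
  have "Cauchy x"
  proof (rule metric_CauchyI)
    fix e :: real assume "e > 0"
    then obtain N where N: "\<And>m n. m \<ge> N \<Longrightarrow> norm (sum (\<lambda>n. norm (x (Suc n) - x n)) {m..<n}) < e"
      using cs by blast
    show "\<exists>M. \<forall>m\<ge>M. \<forall>n\<ge>M. dist (x m) (x n) < e"
    proof (intro exI allI impI)
      fix m n assume mn: "N \<le> m" "N \<le> n"
      show "dist (x m) (x n) < e"
      proof (cases "m \<le> n")
        case True then show ?thesis using le[OF True] N[OF mn(1), of n] by (simp add: dist_commute)
      next
        case False then show ?thesis using le[of n m] N[OF mn(2), of m] by simp
      qed
    qed
  qed
  then show ?thesis by (simp add: Cauchy_convergent_iff)
qed

lemma fejer_interior:
  fixes x :: "nat \<Rightarrow> 'a::{real_inner,complete_space}"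
  assumes fej: "\<And>z n. z \<in> S \<Longrightarrow> norm (x (Suc n) - z) \<le> norm (x n - z) + \<delta> n"
    and d0: "\<And>n. 0 \<le> \<delta> n" and sd: "summable \<delta>"
    and int: "interior S \<noteq> {}"
  shows "convergent x"
proof -
  obtain c where "c \<in> interior S" using int by blast
  then obtain \<rho> where \<rho>: "\<rho> > 0" "ball c \<rho> \<subseteq> S" using mem_interior by blast
  define h where "h = \<rho> / 2"
  have h: "h > 0" "h < \<rho>" using \<rho> by (auto simp: h_def)
  have cS: "c \<in> S" using \<rho> by auto
  define a where "a n = norm (x n - c)" for n
  have ca: "convergent a" unfolding a_def
    by (rule qf_convergent[OF fej[OF cS] _ d0 sd]) simp
  then obtain A where A: "\<And>n. a n \<le> A" using convergent_bounded_real by blast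
  define \<Delta> where "\<Delta> = suminf \<delta>"
  have D: "\<delta> n \<le> \<Delta>" for n unfolding \<Delta>_def by (rule summable_le_suminf_single[OF sd d0])
  define K where "K = 2 * (A + h) + \<Delta>"
  have key: "2 * h * norm (x n - x (Suc n)) \<le> (a n)^2 - (a (Suc n))^2 + \<delta> n * K" for n
  proof (cases "x n = x (Suc n)")
    case True
    have "0 \<le> \<delta> n * K"
    proof -
      have "0 \<le> a n" by (simp add: a_def)
      then have A0: "0 \<le> A" using A[of n] by linarith
      have D0: "0 \<le> \<Delta>" using d0[of n] D[of n] by linarith
      have "0 \<le> K" unfolding K_def using A0 D0 h(1) by simp
      then show ?thesis using d0 by simp
    qed
    then show ?thesis using True by (simp add: a_def)
  next
    case False
    define v where "v = x n - x (Suc n)"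
    have v0: "norm v > 0" using False by (simp add: v_def)
    define u where "u = (1 / norm v) *\<^sub>R v"
    have nu: "norm u = 1" using v0 by (simp add: u_def)
    have uv: "inner v u = norm v" using v0 by (simp add: u_def power2_norm_eq_inner[symmetric] power2_eq_square)
    define z where "z = c + h *\<^sub>R u"
    have "dist c z < \<rho>" using nu h by (simp add: z_def dist_norm)
    then have zS: "z \<in> S" using \<rho>(2) by auto
    have f: "norm (x (Suc n) - z) \<le> norm (x n - z) + \<delta> n" by (rule fej[OF zS])
    have xz: "x m - z = (x m - c) - h *\<^sub>R u" for m by (simp add: z_def algebra_simps)
    have nz: "norm (x n - z) \<le> A + h"
    proof -
      have "norm (x n - z) \<le> norm (x n - c) + norm (h *\<^sub>R u)" unfolding xz by (rule norm_triangle_ineq4)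
      also have "\<dots> = a n + h" using nu h by (simp add: a_def)
      finally show ?thesis using A[of n] by linarith
    qed
    have "(norm (x (Suc n) - z))^2 \<le> (norm (x n - z) + \<delta> n)^2"
      using f by (intro power_mono) auto
    also have "\<dots> = (norm (x n - z))^2 + \<delta> n * (2 * norm (x n - z) + \<delta> n)"
      by (simp add: power2_eq_square algebra_simps)
    also have "\<dots> \<le> (norm (x n - z))^2 + \<delta> n * K"
    proof -
      have "2 * norm (x n - z) \<le> 2 * (A + h)" using nz by simp
      then have "2 * norm (x n - z) + \<delta> n \<le> K" unfolding K_def using D[of n] by (rule add_mono)
      then show ?thesis using d0[of n] by (simp add: mult_left_mono)
    qed
    finally have ineq: "(norm (x (Suc n) - z))^2 \<le> (norm (x n - z))^2 + \<delta> n * K" .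
    have e1: "(norm (x (Suc n) - z))^2 = (a (Suc n))^2 - 2 * h * inner (x (Suc n) - c) u + h^2"
      unfolding xz norm_sub_scale_sq a_def using nu by simp
    have e0: "(norm (x n - z))^2 = (a n)^2 - 2 * h * inner (x n - c) u + h^2"
      unfolding xz norm_sub_scale_sq a_def using nu by simp
    have "inner (x n - c) u - inner (x (Suc n) - c) u = inner v u"
      by (simp add: v_def inner_diff_left)
    then show ?thesis using ineq e0 e1 uv unfolding v_def[symmetric] by (simp add: algebra_simps)
  qed
  have "summable (\<lambda>n. ((a n)^2 - (a (Suc n))^2 + \<delta> n * K) / (2 * h))"
  proof -
    obtain L where "a \<longlonglongrightarrow> L" using ca by (auto simp: convergent_def)
    then have "(\<lambda>n. (a n)^2) \<longlonglongrightarrow> L^2" by (intro tendsto_intros)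
    then have "summable (\<lambda>n. (a n)^2 - (a (Suc n))^2)" by (rule telescope_summable')
    moreover have "summable (\<lambda>n. \<delta> n * K)" using sd by (rule summable_mult2)
    ultimately have "summable (\<lambda>n. (a n)^2 - (a (Suc n))^2 + \<delta> n * K)" by (rule summable_add)
    then show ?thesis by (rule summable_divide)
  qed
  then have "summable (\<lambda>n. norm (x (Suc n) - x n))"
  proof (rule summable_comparison_test[rotated], intro exI allI impI)
    fix n :: nat
    have "norm (x (Suc n) - x n) \<le> ((a n)^2 - (a (Suc n))^2 + \<delta> n * K) / (2 * h)"
      using key[of n] h by (simp add: field_simps norm_minus_commute)
    then show "norm (norm (x (Suc n) - x n)) \<le> ((a n)^2 - (a (Suc n))^2 + \<delta> n * K) / (2 * h)" by simp
  qed
  then show ?thesis by (rule summable_diff_convergent)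
qed

lemma infdist_ge:
  assumes "S \<noteq> {}" "\<And>z. z \<in> S \<Longrightarrow> c \<le> dist a z"
  shows "c \<le> infdist a S"
  unfolding infdist_def using assms by (simp add: cINF_greatest)

lemma fejer_dist:
  fixes x :: "nat \<Rightarrow> 'a::{real_inner,complete_space}"
  assumes fej: "\<And>z n. z \<in> S \<Longrightarrow> norm (x (Suc n) - z) \<le> norm (x n - z) + \<delta> n"
    and d0: "\<And>n. 0 \<le> \<delta> n" and sd: "summable \<delta>"
    and cl: "closed S" and ne: "S \<noteq> {}"
    and li: "Liminf sequentially (\<lambda>n. ereal (infdist (x n) S)) = 0"
  shows "\<exists>z\<in>S. x \<longlonglongrightarrow> z"
proof -
  define d where "d n = infdist (x n) S" for n
  have dstep: "d (Suc n) \<le> d n + \<delta> n" for n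
  proof -
    have "d (Suc n) - \<delta> n \<le> infdist (x n) S"
    proof (rule infdist_ge[OF ne])
      fix z assume z: "z \<in> S"
      have "d (Suc n) \<le> dist (x (Suc n)) z" unfolding d_def by (rule infdist_le[OF z])
      also have "\<dots> \<le> dist (x n) z + \<delta> n" using fej[OF z, of n] by (simp add: dist_norm)
      finally show "d (Suc n) - \<delta> n \<le> dist (x n) z" by simp
    qed
    then show ?thesis by (simp add: d_def)
  qed
  have "convergent d" by (rule qf_convergent[OF dstep _ d0 sd]) (simp add: d_def infdist_nonneg)
  then obtain D where D: "d \<longlonglongrightarrow> D" by (auto simp: convergent_def)
  then have "(\<lambda>n. ereal (d n)) \<longlonglongrightarrow> ereal D" by (rule tendsto_ereal)
  then have "Liminf sequentially (\<lambda>n. ereal (d n)) = ereal D" by (rule lim_imp_Liminf[OF trivial_limit_sequentially])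
  then have D0: "D = 0" using li by (simp add: d_def zero_ereal_def)
  define P where "P n = (\<Sum>k<n. \<delta> k)" for n
  define t where "t n = suminf \<delta> - P n" for n
  have t0: "t \<longlonglongrightarrow> 0"
  proof -
    have "P \<longlonglongrightarrow> suminf \<delta>" unfolding P_def using summable_LIMSEQ[OF sd] by simp
    then have "(\<lambda>n. suminf \<delta> - P n) \<longlonglongrightarrow> suminf \<delta> - suminf \<delta>" by (intro tendsto_diff tendsto_const)
    then show ?thesis unfolding t_def[abs_def] by simp
  qed
  have Pm: "P m \<le> suminf \<delta>" for m unfolding P_def using sd d0 by (intro sum_le_suminf) auto
  have distle: "dist (x m) (x n) \<le> 2 * d n + t n" if "n \<le> m" for m n
  proof -
    have "(dist (x m) (x n) - t n) / 2 \<le> infdist (x n) S"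
    proof (rule infdist_ge[OF ne])
      fix z assume z: "z \<in> S"
      have "norm (x m - z) \<le> norm (x n - z) + P m - P n"
        unfolding P_def by (rule qf_iter[of "\<lambda>n. norm (x n - z)" \<delta>, OF fej[OF z] that])
      then have "norm (x m - z) \<le> norm (x n - z) + t n" using Pm[of m] by (simp add: t_def)
      moreover have "dist (x m) (x n) \<le> norm (x m - z) + norm (x n - z)"
        by (metis dist_norm dist_triangle2)
      ultimately show "(dist (x m) (x n) - t n) / 2 \<le> dist (x n) z"
        by (simp add: dist_norm)
    qed
    then show ?thesis by (simp add: d_def)
  qed
  have g0: "(\<lambda>n. 2 * d n + t n) \<longlonglongrightarrow> 0"
    using tendsto_add[OF tendsto_mult[OF tendsto_const D] t0] D0 by simp
  have "Cauchy x"
  proof (rule metric_CauchyI)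
    fix e :: real assume e: "e > 0"
    then obtain N where N: "\<And>n. n \<ge> N \<Longrightarrow> \<bar>2 * d n + t n\<bar> < e / 2"
      using g0 unfolding LIMSEQ_def dist_real_def by (metis half_gt_zero diff_zero)
    show "\<exists>M. \<forall>m\<ge>M. \<forall>n\<ge>M. dist (x m) (x n) < e"
    proof (intro exI allI impI)
      fix m n assume mn: "N \<le> m" "N \<le> n"
      have "dist (x m) (x N) < e / 2" using distle[OF mn(1)] N[of N] abs_ge_self[of "2 * d N + t N"] by linarith
      moreover have "dist (x n) (x N) < e / 2" using distle[OF mn(2)] N[of N] abs_ge_self[of "2 * d N + t N"] by linarith
      ultimately show "dist (x m) (x n) < e" using dist_triangle2[of "x m" "x n" "x N"] by linarith
    qed
  qed
  then obtain w where w: "x \<longlonglongrightarrow> w" by (auto simp: Cauchy_convergent_iff convergent_def)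
  have "d \<longlonglongrightarrow> infdist w S" unfolding d_def by (rule tendsto_infdist[OF w])
  then have "infdist w S = 0" using D D0 LIMSEQ_unique by blast
  then have "w \<in> S" using in_closure_iff_infdist_zero[OF ne] cl closure_closed by metis
  then show ?thesis using w by blast
qed

lemma param_a:
  fixes \<epsilon> \<alpha> :: real
  assumes "0 < \<epsilon>" "0 < \<alpha>" "\<alpha> \<le> 1/(1+\<epsilon>)"
  shows "\<epsilon> \<le> (1-\<alpha>)/\<alpha>" "\<alpha> < 1"
proof -
  have "\<alpha> * (1+\<epsilon>) \<le> 1" using assms by (simp add: field_simps)
  then show "\<epsilon> \<le> (1-\<alpha>)/\<alpha>" using assms by (simp add: field_simps)
  show "\<alpha> < 1" using \<open>\<alpha> * (1+\<epsilon>) \<le> 1\<close> assms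
    by (smt (verit) mult_less_cancel_left1)
qed

lemma param:
  fixes \<epsilon> \<alpha>1 \<alpha>2 l \<phi> :: real
  assumes e: "0<\<epsilon>" "\<epsilon><1/2" and a1: "0<\<alpha>1" "\<alpha>1 \<le> 1/(1+\<epsilon>)" and a2: "0 < \<alpha>2" "\<alpha>2 \<le> 1/(1+\<epsilon>)"
   and l: "l \<le> (1-\<epsilon>)*(1+\<epsilon>*\<phi>)/\<phi>" and phi: "\<phi> = (\<alpha>1+\<alpha>2-2*\<alpha>1*\<alpha>2)/(1-\<alpha>1*\<alpha>2)"
  shows "l - 1 \<le> ((1-\<alpha>1)/\<alpha>1)*((1-\<alpha>2)/\<alpha>2)/((1-\<alpha>1)/\<alpha>1 + (1-\<alpha>2)/\<alpha>2) - \<epsilon>^2"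
proof -
  define b1 where "b1 = (1-\<alpha>1)/\<alpha>1"
  define b2 where "b2 = (1-\<alpha>2)/\<alpha>2"
  have b1: "\<epsilon> \<le> b1" "\<alpha>1 < 1" using param_a[OF e(1) a1] by (auto simp: b1_def)
  have b2: "\<epsilon> \<le> b2" "\<alpha>2 < 1" using param_a[OF e(1) a2] by (auto simp: b2_def)
  define s where "s = b1 * b2 / (b1 + b2)"
  have s0: "0 \<le> s" using b1 b2 e by (simp add: s_def)
  have den: "0 < 1 - \<alpha>1 * \<alpha>2" using a1 a2 b1 b2
    by (smt (verit) mult_less_cancel_left1 mult_pos_pos)
  have num: "0 < \<alpha>1+\<alpha>2-2*\<alpha>1*\<alpha>2"
  proof -
    have "0 < \<alpha>1 * (1 - \<alpha>2)" "0 < \<alpha>2 * (1 - \<alpha>1)" using a1 a2 b1 b2 by auto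
    then show ?thesis by (simp add: algebra_simps)
  qed
  have phi0: "\<phi> > 0" using phi den num by simp
  have inv: "1 / \<phi> = s + 1"
  proof -
    have "b1 + b2 = (\<alpha>1+\<alpha>2-2*\<alpha>1*\<alpha>2) / (\<alpha>1 * \<alpha>2)" using a1 a2
      by (simp add: b1_def b2_def field_simps)
    moreover have "b1 * b2 + b1 + b2 = (1 - \<alpha>1 * \<alpha>2) / (\<alpha>1 * \<alpha>2)" using a1 a2
      by (simp add: b1_def b2_def field_simps)
    moreover have "s + 1 = (b1 * b2 + b1 + b2) / (b1 + b2)" using b1 b2 e
      by (simp add: s_def field_simps)
    ultimately show ?thesis using phi num den a1 a2 by simp
  qed
  have "(1-\<epsilon>)*(1+\<epsilon>*\<phi>)/\<phi> = (1-\<epsilon>) * (1/\<phi>) + \<epsilon> * (1 - \<epsilon>)"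
    using phi0 by (simp add: field_simps)
  also have "\<dots> = (1-\<epsilon>) * s + 1 - \<epsilon>^2" unfolding inv by (simp add: algebra_simps power2_eq_square)
  finally have "l - 1 \<le> (1-\<epsilon>) * s - \<epsilon>^2" using l by simp
  also have "\<dots> \<le> s - \<epsilon>^2" using s0 e by (simp add: algebra_simps)
  finally show ?thesis by (simp add: s_def b1_def b2_def)
qed

lemma quad_real:
  fixes \<epsilon> a1 a2 \<mu> p X d w :: real
  assumes e: "0 < \<epsilon>" "\<epsilon> \<le> 1" and a: "\<epsilon> \<le> a1" "\<epsilon> \<le> a2"
    and mu: "\<mu> \<le> a1 * a2 / (a1 + a2) - \<epsilon>^2"
    and X: "0 \<le> X" and d: "0 \<le> d" and w: "0 \<le> w" "w \<le> 1"
    and pX: "p \<le> 2 * X + 2 * (w^2 * d)"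
  shows "\<epsilon>^2 * p \<le> 2 * ((a1 + a2) * X + (a1 * a2 / (a1 + a2) - \<mu>) * d)"
proof -
  have ee: "\<epsilon>^2 \<le> \<epsilon>" using e by (simp add: power2_eq_square mult_left_le_one_le)
  have h1': "\<epsilon>^2 * p \<le> \<epsilon>^2 * (2 * X + 2 * (w^2 * d))" using pX by (simp add: mult_left_mono)
  have h1: "\<epsilon>^2 * p \<le> 2 * (\<epsilon>^2 * X) + 2 * (\<epsilon>^2 * (w^2 * d))" using h1' by (simp add: distrib_left)
  have "w^2 \<le> 1" using w by (simp add: power_le_one)
  then have h2: "w^2 * d \<le> d" using d by (simp add: mult_left_le_one_le)
  have h2': "\<epsilon>^2 * (w^2 * d) \<le> \<epsilon>^2 * d" using h2 by (simp add: mult_left_mono)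
  have "2 * \<epsilon>^2 * X \<le> (a1 + a2) * X" using a ee X by (intro mult_right_mono) auto
  then have h3: "2 * (\<epsilon>^2 * X) \<le> (a1 + a2) * X" by (simp add: mult.assoc)
  have h4: "\<epsilon>^2 * d \<le> (a1 * a2 / (a1 + a2) - \<mu>) * d" using mu d by (intro mult_right_mono) auto
  have h5: "0 \<le> (a1 + a2) * X" using a e X by simp
  have lin: "\<And>P x y z U V::real. P \<le> 2*x + 2*y \<Longrightarrow> y \<le> z \<Longrightarrow> 2*x \<le> U \<Longrightarrow> z \<le> V \<Longrightarrow> 0 \<le> U \<Longrightarrow> P \<le> 2*(U+V)"
    by (simp add: distrib_left)
  show ?thesis by (rule lin[OF h1 h2' h3 h4 h5])
qed


lemma ident_real:
  fixes a1 a2 p t dd \<mu> :: real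
  assumes pos: "0 < a1 + a2"
  shows "a1 * p + a2 * (dd - 2 * t + p) - \<mu> * dd = (a1 + a2) * (p - 2 * (a2 / (a1 + a2)) * t + (a2 / (a1 + a2))^2 * dd) + (a1 * a2 / (a1 + a2) - \<mu>) * dd"
proof -
  define k where "k = a1 + a2"
  have k: "k \<noteq> 0" using pos by (simp add: k_def)
  have kw: "k * (a2 / k) = a2" using k by simp
  have kw2: "k * (a2 / k)^2 = a2^2 / k" using k by (simp add: power2_eq_square)
  have s1: "a2^2 + a1 * a2 = a2 * k" by (simp add: k_def power2_eq_square algebra_simps)
  have s: "a2^2 / k + a1 * a2 / k = a2"
    using k by (simp add: add_divide_distrib[symmetric] s1)
  have "k * (p - 2 * (a2 / k) * t + (a2 / k)^2 * dd) = k * p - 2 * (k * (a2 / k)) * t + (k * (a2 / k)^2) * dd"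
    by (simp add: algebra_simps)
  also have "\<dots> = k * p - 2 * a2 * t + (a2^2 / k) * dd" unfolding kw kw2 ..
  finally have "k * (p - 2 * (a2 / k) * t + (a2 / k)^2 * dd) + (a1 * a2 / k - \<mu>) * dd = k * p - 2 * a2 * t + (a2^2 / k + a1 * a2 / k) * dd - \<mu> * dd"
    by (simp add: algebra_simps)
  also have "\<dots> = k * p - 2 * a2 * t + a2 * dd - \<mu> * dd" unfolding s ..
  finally show ?thesis by (simp add: k_def algebra_simps)
qed

lemma avg_ineq:
  fixes T :: "'a::real_inner \<Rightarrow> 'a"
  assumes "averaged \<alpha> T"
  shows "(norm (T x - T y))^2 \<le> (norm (x - y))^2 - ((1-\<alpha>)/\<alpha>) * (norm ((x - T x) - (y - T y)))^2"
proof -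
  from assms obtain R where \<alpha>: "0<\<alpha>" "\<alpha><1" and R: "nonexpansive R"
    and T: "T = (\<lambda>x. (1-\<alpha>) *\<^sub>R x + \<alpha> *\<^sub>R R x)" by (auto simp: averaged_def)
  define u where "u = x - y"
  define v where "v = R x - R y"
  have nv: "norm v \<le> norm u" using R by (simp add: nonexpansive_def u_def v_def)
  then have nv2: "(norm v)^2 \<le> (norm u)^2" by (simp add: power_mono)
  have e1: "T x - T y = (1-\<alpha>) *\<^sub>R u + \<alpha> *\<^sub>R v" by (simp add: T u_def v_def algebra_simps)
  have e2: "(x - T x) - (y - T y) = \<alpha> *\<^sub>R (u - v)" by (simp add: T u_def v_def algebra_simps)
  define U where "U = (norm u)^2"
  define V where "V = (norm v)^2"
  define W where "W = inner u v"
  have n1: "(norm ((1-\<alpha>) *\<^sub>R u + \<alpha> *\<^sub>R v))^2 = (1-\<alpha>)^2 * U + 2*(1-\<alpha>)*\<alpha> * W + \<alpha>^2 * V"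
    unfolding U_def V_def W_def power2_norm_eq_inner
    by (simp add: inner_add_left inner_add_right inner_commute power2_eq_square algebra_simps)
  have n2: "(norm (\<alpha> *\<^sub>R (u - v)))^2 = \<alpha>^2 * (U - 2 * W + V)"
    unfolding U_def V_def W_def power2_norm_eq_inner
    by (simp add: inner_diff_left inner_diff_right inner_commute power2_eq_square algebra_simps)
  have c: "((1-\<alpha>)/\<alpha>) * \<alpha>^2 = (1-\<alpha>)*\<alpha>" using \<alpha> by (simp add: power2_eq_square)
  have r: "U - (1-\<alpha>)*\<alpha>*(U - 2*W + V) - ((1-\<alpha>)^2 * U + 2*(1-\<alpha>)*\<alpha> * W + \<alpha>^2 * V) = \<alpha> * (U - V)"
    by (simp add: algebra_simps power2_eq_square)
  have "0 \<le> \<alpha> * (U - V)" using \<alpha> nv2 by (simp add: U_def V_def)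
  then have "(1-\<alpha>)^2 * U + 2*(1-\<alpha>)*\<alpha> * W + \<alpha>^2 * V \<le> U - (1-\<alpha>)*\<alpha>*(U - 2*W + V)"
    using r by linarith
  also have "\<dots> = U - ((1-\<alpha>)/\<alpha>) * (\<alpha>^2 * (U - 2 * W + V))" using c by (simp add: mult.assoc[symmetric])
  finally show ?thesis unfolding e1 e2 n1 n2 by (simp add: U_def u_def)
qed

lemma comp_ineq:
  fixes T1 T2 :: "'a::real_inner \<Rightarrow> 'a"
  assumes "averaged \<alpha>1 T1" "averaged \<alpha>2 T2" "T1 (T2 z) = z"
  shows "(norm (T1 (T2 x) - z))^2 \<le> (norm (x - z))^2
     - ((1-\<alpha>1)/\<alpha>1) * (norm ((T2 x - T1 (T2 x)) - (T2 z - z)))^2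
     - ((1-\<alpha>2)/\<alpha>2) * (norm ((x - T2 x) - (z - T2 z)))^2"
  using avg_ineq[OF assms(1), of "T2 x" "T2 z"] avg_ineq[OF assms(2), of x z] assms(3) by simp

lemma step_ineq:
  fixes x z Tx A B :: "'a::real_inner"
  assumes h: "(norm (Tx - z))^2 \<le> (norm (x - z))^2 - a1 * (norm A)^2 - a2 * (norm B)^2"
    and AB: "A + B = x - Tx" and l: "0 \<le> l"
  shows "(norm (x + l *\<^sub>R (Tx - x) - z))^2 \<le> (norm (x - z))^2 - l * (a1 * (norm A)^2 + a2 * (norm B)^2 - (l - 1) * (norm (A + B))^2)"
proof -
  define u where "u = x - z"
  define D where "D = Tx - x"
  have nD: "norm (A + B) = norm D" by (simp add: AB D_def norm_minus_commute)
  have N1: "(norm (Tx - z))^2 = (norm u)^2 + 2 * inner u D + (norm D)^2"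
  proof -
    have "Tx - z = u + D" by (simp add: u_def D_def)
    then show ?thesis unfolding power2_norm_eq_inner by (simp add: inner_add_left inner_add_right inner_commute)
  qed
  have N2: "(norm (x + l *\<^sub>R (Tx - x) - z))^2 = (norm u)^2 + 2 * l * inner u D + l^2 * (norm D)^2"
  proof -
    have "x + l *\<^sub>R (Tx - x) - z = u + l *\<^sub>R D" by (simp add: u_def D_def algebra_simps)
    then show ?thesis unfolding power2_norm_eq_inner
      by (simp add: inner_add_left inner_add_right inner_commute power2_eq_square algebra_simps)
  qed
  define P where "P = a1 * (norm A)^2 + a2 * (norm B)^2"
  define ND where "ND = (norm D)^2"
  define I where "I = inner u D"
  have "2 * I + ND + P \<le> 0" using h N1 by (simp add: P_def u_def I_def ND_def)
  then have "l * (2 * I + ND + P) \<le> 0" using l by (simp add: mult_nonneg_nonpos)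
  moreover have "(norm (x + l *\<^sub>R (Tx - x) - z))^2 = (norm u)^2 + 2 * l * I + l^2 * ND"
    unfolding N2 I_def ND_def ..
  moreover have "(norm u)^2 + 2 * l * I + l^2 * ND - ((norm u)^2 - l * (P - (l - 1) * ND)) = l * (2 * I + ND + P)"
    by (simp add: algebra_simps power2_eq_square)
  ultimately have "(norm (x + l *\<^sub>R (Tx - x) - z))^2 \<le> (norm u)^2 - l * (P - (l - 1) * ND)" by linarith
  then show ?thesis unfolding nD P_def u_def ND_def .
qed

lemma quad_vec:
  fixes A B :: "'a::real_inner"
  assumes e: "0 < \<epsilon>" "\<epsilon> \<le> 1" and a: "\<epsilon> \<le> a1" "\<epsilon> \<le> a2"
    and mu: "\<mu> \<le> a1 * a2 / (a1 + a2) - \<epsilon>^2"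
  shows "\<epsilon>^2 * (norm A)^2 \<le> 2 * (a1 * (norm A)^2 + a2 * (norm B)^2 - \<mu> * (norm (A + B))^2)"
proof -
  define D where "D = A + B"
  have pos: "a1 + a2 > 0" using a e by simp
  define w where "w = a2 / (a1 + a2)"
  have w: "0 \<le> w" "w \<le> 1" using a e pos by (auto simp: w_def field_simps)
  define X where "X = (norm (A - w *\<^sub>R D))^2"
  define d where "d = (norm D)^2"
  have pX: "(norm A)^2 \<le> 2 * X + 2 * (w^2 * d)"
  proof -
    have "norm A = norm ((A - w *\<^sub>R D) + w *\<^sub>R D)" by simp
    also have "\<dots> \<le> norm (A - w *\<^sub>R D) + norm (w *\<^sub>R D)" by (rule norm_triangle_ineq)
    also have "norm (w *\<^sub>R D) = w * norm D" using w by simp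
    finally have t: "norm A \<le> norm (A - w *\<^sub>R D) + w * norm D" .
    then have "(norm A)^2 \<le> (norm (A - w *\<^sub>R D) + w * norm D)^2" by (intro power_mono) auto
    also have "\<dots> \<le> 2 * (norm (A - w *\<^sub>R D))^2 + 2 * (w * norm D)^2"
    proof -
      have sq: "(a+b)^2 \<le> 2*a^2 + 2*b^2" for a b :: real
      proof -
        have "(a+b)^2 = 2*a^2 + 2*b^2 - (a-b)^2" by (simp add: power2_eq_square algebra_simps)
        then show ?thesis using zero_le_power2[of "a-b"] by linarith
      qed
      show ?thesis by (rule sq)
    qed
    finally show ?thesis by (simp add: X_def d_def power_mult_distrib)
  qed
  have ident: "a1 * (norm A)^2 + a2 * (norm B)^2 - \<mu> * (norm (A + B))^2 = (a1 + a2) * X + (a1 * a2 / (a1 + a2) - \<mu>) * d"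
  proof -
    have B: "B = D - A" by (simp add: D_def)
    define p where "p = inner A A"
    define t where "t = inner A D"
    define dd where "dd = inner D D"
    have nB: "(norm B)^2 = dd - 2 * t + p" unfolding B power2_norm_eq_inner p_def t_def dd_def
      by (simp add: inner_diff_left inner_diff_right inner_commute)
    have nX: "X = p - 2 * w * t + w^2 * dd" unfolding X_def power2_norm_eq_inner p_def t_def dd_def
      by (simp add: inner_diff_left inner_diff_right inner_commute power2_eq_square algebra_simps)
    have "a1 * p + a2 * (dd - 2 * t + p) - \<mu> * dd = (a1 + a2) * (p - 2 * w * t + w^2 * dd) + (a1 * a2 / (a1 + a2) - \<mu>) * dd"
      unfolding w_def by (rule ident_real[OF pos])
    then show ?thesis using nB nX unfolding d_def D_def[symmetric] power2_norm_eq_inner p_def dd_def by simp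
  qed
  have "\<epsilon>^2 * (norm A)^2 \<le> 2 * ((a1 + a2) * X + (a1 * a2 / (a1 + a2) - \<mu>) * d)"
    by (rule quad_real[OF e a mu _ _ w pX]) (auto simp: X_def d_def)
  then show ?thesis unfolding ident .
qed

lemma fej_from_step:
  fixes x y :: "nat \<Rightarrow> 'a::real_normed_vector"
  assumes xy: "norm (x (Suc n) - y n) \<le> \<delta> n"
    and yz: "(norm (y n - z))^2 + c n \<le> (norm (x n - z))^2" and c: "0 \<le> c n"
  shows "norm (x (Suc n) - z) \<le> norm (x n - z) + \<delta> n" "norm (y n - z) \<le> norm (x n - z)"
proof -
  have "(norm (y n - z))^2 \<le> (norm (x n - z))^2" using yz c by linarith
  then show yx: "norm (y n - z) \<le> norm (x n - z)" by (rule power2_le_imp_le) simp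
  have "norm (x (Suc n) - z) \<le> norm (x (Suc n) - y n) + norm (y n - z)"
    by (metis add.commute diff_add_cancel norm_triangle_ineq4 diff_diff_eq2 norm_triangle_sub
        order_trans norm_minus_commute dist_norm dist_triangle)
  then show "norm (x (Suc n) - z) \<le> norm (x n - z) + \<delta> n" using xy yx by linarith
qed

lemma summable_from_step:
  fixes x y :: "nat \<Rightarrow> 'a::real_normed_vector"
  assumes xy: "\<And>n. norm (x (Suc n) - y n) \<le> \<delta> n"
    and yz: "\<And>n. (norm (y n - z))^2 + c n \<le> (norm (x n - z))^2" and c: "\<And>n. 0 \<le> c n"
    and d0: "\<And>n. 0 \<le> \<delta> n" and sd: "summable \<delta>"
  shows "summable c"
proof -
  note F = fej_from_step[of x n y \<delta> z c for n, OF xy yz c]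
  define a where "a n = norm (x n - z)" for n
  have ca: "convergent a" unfolding a_def
    by (rule qf_convergent[of _ \<delta>]) (use F(1) d0 sd in auto)
  then obtain Bd where Bd: "\<And>n. a n \<le> Bd" using convergent_bounded_real by blast
  define \<Delta> where "\<Delta> = suminf \<delta>"
  have D: "\<delta> n \<le> \<Delta>" for n unfolding \<Delta>_def by (rule summable_le_suminf_single[OF sd d0])
  define K where "K = 2 * Bd + \<Delta>"
  have key: "c n \<le> (a n)^2 - (a (Suc n))^2 + \<delta> n * K" for n
  proof -
    have "norm (x (Suc n) - z) \<le> norm (x (Suc n) - y n) + norm (y n - z)"
      by (metis add.commute diff_add_cancel norm_triangle_ineq4 diff_diff_eq2 norm_triangle_sub
        order_trans norm_minus_commute dist_norm dist_triangle)
    also have "\<dots> \<le> norm (y n - z) + \<delta> n" using xy[of n] by linarith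
    finally have "(a (Suc n))^2 \<le> (norm (y n - z) + \<delta> n)^2" unfolding a_def by (intro power_mono) auto
    also have "\<dots> = (norm (y n - z))^2 + \<delta> n * (2 * norm (y n - z) + \<delta> n)"
      by (simp add: power2_eq_square algebra_simps)
    also have "\<dots> \<le> (norm (y n - z))^2 + \<delta> n * K"
    proof -
      have "norm (y n - z) \<le> Bd" using F(2)[of n] Bd[of n] by (simp add: a_def)
      then have "2 * norm (y n - z) \<le> 2 * Bd" by simp
      then have "2 * norm (y n - z) + \<delta> n \<le> K" unfolding K_def using D[of n] by (rule add_mono)
      then show ?thesis using d0[of n] by (simp add: mult_left_mono)
    qed
    finally show ?thesis using yz[of n] by (simp add: a_def)
  qed
  have "summable (\<lambda>n. (a n)^2 - (a (Suc n))^2 + \<delta> n * K)"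
  proof -
    obtain L where "a \<longlonglongrightarrow> L" using ca by (auto simp: convergent_def)
    then have "(\<lambda>n. (a n)^2) \<longlonglongrightarrow> L^2" by (intro tendsto_intros)
    then have "summable (\<lambda>n. (a n)^2 - (a (Suc n))^2)" by (rule telescope_summable')
    moreover have "summable (\<lambda>n. \<delta> n * K)" using sd by (rule summable_mult2)
    ultimately show ?thesis by (rule summable_add)
  qed
  then show ?thesis
    by (rule summable_comparison_test[rotated]) (use key c in \<open>auto intro!: exI[of _ 0]\<close>)
qed

lemma avg_nonexp: "averaged \<alpha> T \<Longrightarrow> norm (T x - T y) \<le> norm (x - y)"
  by (simp add: averaged_def nonexpansive_def)

lemma one_step:
  fixes x z e1 e2 :: "'a::real_inner" and T1 T2 :: "'a \<Rightarrow> 'a"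
  assumes e: "0 < \<epsilon>" "\<epsilon> < 1/2"
    and a1: "0 < \<alpha>1" "\<alpha>1 \<le> 1/(1+\<epsilon>)" and a2: "0 < \<alpha>2" "\<alpha>2 \<le> 1/(1+\<epsilon>)"
    and avg1: "averaged \<alpha>1 T1" and avg2: "averaged \<alpha>2 T2"
    and l: "\<epsilon> \<le> l" "l \<le> (1-\<epsilon>)*(1+\<epsilon>*\<phi>)/\<phi>" and phi: "\<phi> = (\<alpha>1+\<alpha>2-2*\<alpha>1*\<alpha>2)/(1-\<alpha>1*\<alpha>2)"
    and fz: "T1 (T2 z) = z"
  shows "(norm (x + l *\<^sub>R (T1 (T2 x) - x) - z))^2 + (\<epsilon>^3/2) * (norm (T1 (T2 x) - T2 x + T2 z - z))^2 \<le> (norm (x - z))^2"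
    and "(norm (x + l *\<^sub>R (T1 (T2 x) - x) - z))^2 + (\<epsilon>^3/2) * (norm (T2 x - x - T2 z + z))^2 \<le> (norm (x - z))^2"
    and "norm ((x + l *\<^sub>R (T1 (T2 x + e2) + e1 - x)) - (x + l *\<^sub>R (T1 (T2 x) - x))) \<le> l * norm e1 + l * norm e2"
proof -
  define b1 where "b1 = (1-\<alpha>1)/\<alpha>1"
  define b2 where "b2 = (1-\<alpha>2)/\<alpha>2"
  have pb1: "\<epsilon> \<le> b1" using param_a[OF e(1) a1] by (simp add: b1_def)
  have pb2: "\<epsilon> \<le> b2" using param_a[OF e(1) a2] by (simp add: b2_def)
  have mu: "l - 1 \<le> b1 * b2 / (b1 + b2) - \<epsilon>^2" unfolding b1_def b2_def by (rule param[OF e a1 a2 l(2) phi])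
  have mu': "l - 1 \<le> b2 * b1 / (b2 + b1) - \<epsilon>^2" using mu by (simp add: mult.commute add.commute)
  have e1': "\<epsilon> \<le> 1" using e by simp
  have l0: "0 \<le> l" using e l by simp
  define A where "A = (T2 x - T1 (T2 x)) - (T2 z - z)"
  define B where "B = (x - T2 x) - (z - T2 z)"
  have h: "(norm (T1 (T2 x) - z))^2 \<le> (norm (x - z))^2 - b1 * (norm A)^2 - b2 * (norm B)^2"
    using comp_ineq[OF avg1 avg2 fz, of x] by (simp add: A_def B_def b1_def b2_def)
  have AB: "A + B = x - T1 (T2 x)" using fz by (simp add: A_def B_def algebra_simps)
  define Q where "Q = b1 * (norm A)^2 + b2 * (norm B)^2 - (l - 1) * (norm (A + B))^2"
  have st: "(norm (x + l *\<^sub>R (T1 (T2 x) - x) - z))^2 \<le> (norm (x - z))^2 - l * Q"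
    unfolding Q_def by (rule step_ineq[OF h AB l0])
  have qA: "\<epsilon>^2 * (norm A)^2 \<le> 2 * Q" unfolding Q_def by (rule quad_vec[OF e(1) e1' pb1 pb2 mu])
  have qB: "\<epsilon>^2 * (norm B)^2 \<le> 2 * Q"
    using quad_vec[OF e(1) e1' pb2 pb1 mu', of B A] unfolding Q_def by (simp add: add.commute)
  have gen: "(\<epsilon>^3/2) * N \<le> l * Q" if qN: "\<epsilon>^2 * N \<le> 2 * Q" and N0: "0 \<le> N" for N
  proof -
    have Q0: "0 \<le> Q" using qN N0 e by (smt (verit) mult_nonneg_nonneg zero_le_power2)
    have "\<epsilon> * (\<epsilon>^2 * N) \<le> \<epsilon> * (2 * Q)" using qN e by (simp add: mult_left_mono)
    also have "\<dots> \<le> l * (2 * Q)" using l Q0 by (intro mult_right_mono) auto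
    finally have "\<epsilon> * (\<epsilon>^2 * N) \<le> l * (2 * Q)" .
    then show ?thesis by (simp add: power3_eq_cube power2_eq_square algebra_simps)
  qed
  have nA: "norm (T1 (T2 x) - T2 x + T2 z - z) = norm A"
  proof -
    have "T1 (T2 x) - T2 x + T2 z - z = - A" by (simp add: A_def algebra_simps)
    then show ?thesis by simp
  qed
  have nB: "norm (T2 x - x - T2 z + z) = norm B"
  proof -
    have "T2 x - x - T2 z + z = - B" by (simp add: B_def algebra_simps)
    then show ?thesis by simp
  qed
  show "(norm (x + l *\<^sub>R (T1 (T2 x) - x) - z))^2 + (\<epsilon>^3/2) * (norm (T1 (T2 x) - T2 x + T2 z - z))^2 \<le> (norm (x - z))^2"
    using st gen[OF qA] unfolding nA by simp
  show "(norm (x + l *\<^sub>R (T1 (T2 x) - x) - z))^2 + (\<epsilon>^3/2) * (norm (T2 x - x - T2 z + z))^2 \<le> (norm (x - z))^2"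
    using st gen[OF qB] unfolding nB by simp
  have "(x + l *\<^sub>R (T1 (T2 x + e2) + e1 - x)) - (x + l *\<^sub>R (T1 (T2 x) - x)) = l *\<^sub>R ((T1 (T2 x + e2) - T1 (T2 x)) + e1)"
    by (simp add: algebra_simps)
  then have "norm ((x + l *\<^sub>R (T1 (T2 x + e2) + e1 - x)) - (x + l *\<^sub>R (T1 (T2 x) - x))) = l * norm ((T1 (T2 x + e2) - T1 (T2 x)) + e1)"
    using l0 by simp
  also have "\<dots> \<le> l * (norm e2 + norm e1)"
  proof -
    have "norm ((T1 (T2 x + e2) - T1 (T2 x)) + e1) \<le> norm (T1 (T2 x + e2) - T1 (T2 x)) + norm e1" by (rule norm_triangle_ineq)
    also have "norm (T1 (T2 x + e2) - T1 (T2 x)) \<le> norm e2" using avg_nonexp[OF avg1, of "T2 x + e2" "T2 x"] by simp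
    finally show ?thesis using l0 by (simp add: mult_left_mono)
  qed
  finally show "norm ((x + l *\<^sub>R (T1 (T2 x + e2) + e1 - x)) - (x + l *\<^sub>R (T1 (T2 x) - x))) \<le> l * norm e1 + l * norm e2"
    by (simp add: algebra_simps)
qed

lemma avg_cont:
  assumes "averaged \<alpha> (T :: 'a::real_normed_vector \<Rightarrow> 'a)"
  shows "continuous_on UNIV T"
  unfolding continuous_on_iff
proof (intro ballI allI impI)
  fix x :: 'a and e :: real assume e: "0 < e"
  show "\<exists>d>0. \<forall>x'\<in>UNIV. dist x' x < d \<longrightarrow> dist (T x') (T x) < e"
    using avg_nonexp[OF assms] e by (intro exI[of _ e]) (auto simp: dist_norm intro: le_less_trans)
qed

theorem corollary4p1:
  fixes \<epsilon> :: real
    and x0 :: "'a::{real_inner, complete_space}"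
    and \<alpha>1 \<alpha>2 lam :: "nat \<Rightarrow> real"
    and T1 T2 :: "nat \<Rightarrow> 'a \<Rightarrow> 'a"
    and e1 e2 x :: "nat \<Rightarrow> 'a"
    and S :: "'a set"
  assumes eps: "0 < \<epsilon>" "\<epsilon> < 1/2"
    and alpha1: "\<And>n. 0 < \<alpha>1 n \<and> \<alpha>1 n \<le> 1 / (1 + \<epsilon>)"
    and alpha2: "\<And>n. 0 < \<alpha>2 n \<and> \<alpha>2 n \<le> 1 / (1 + \<epsilon>)"
    and avg1: "\<And>n. averaged (\<alpha>1 n) (T1 n)"
    and avg2: "\<And>n. averaged (\<alpha>2 n) (T2 n)"
    and lam: "\<And>n. let \<phi> = (\<alpha>1 n + \<alpha>2 n - 2 * \<alpha>1 n * \<alpha>2 n) / (1 - \<alpha>1 n * \<alpha>2 n)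
                in \<epsilon> \<le> lam n \<and> lam n \<le> (1 - \<epsilon>) * (1 + \<epsilon> * \<phi>) / \<phi>"
    and x_0: "x 0 = x0"
    and x_Suc: "\<And>n. x (Suc n) = x n + lam n *\<^sub>R (T1 n (T2 n (x n) + e2 n) + e1 n - x n)"
    and S_def: "S = (\<Inter>n. Fix (\<lambda>y. T1 n (T2 n y)))"
    and S_ne: "S \<noteq> {}"
    and sum_e1: "summable (\<lambda>n. lam n * norm (e1 n))"
    and sum_e2: "summable (\<lambda>n. lam n * norm (e2 n))"
  shows "(\<forall>z\<in>S. summable (\<lambda>n. (norm (T1 n (T2 n (x n)) - T2 n (x n) + T2 n z - z))\<^sup>2))
    \<and> (\<forall>z\<in>S. summable (\<lambda>n. (norm (T2 n (x n) - x n - T2 n z + z))\<^sup>2))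
    \<and> summable (\<lambda>n. (norm (T1 n (T2 n (x n)) - x n))\<^sup>2)
    \<and> ((\<forall>z. weak_seq_cluster_point x z \<longrightarrow> z \<in> S) \<longrightarrow>
           (\<exists>z\<in>S. weakly_converges x z \<and> (interior S \<noteq> {} \<longrightarrow> x \<longlonglongrightarrow> z)))
    \<and> (Liminf sequentially (\<lambda>n. ereal (infdist (x n) S)) = 0 \<longrightarrow> (\<exists>z\<in>S. x \<longlonglongrightarrow> z))"
proof -
  define \<phi> where "\<phi> n = (\<alpha>1 n + \<alpha>2 n - 2 * \<alpha>1 n * \<alpha>2 n) / (1 - \<alpha>1 n * \<alpha>2 n)" for n
  define \<delta> where "\<delta> n = lam n * norm (e1 n) + lam n * norm (e2 n)" for n
  define y where "y n = x n + lam n *\<^sub>R (T1 n (T2 n (x n)) - x n)" for n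
  define c where "c = \<epsilon>^3/2"
  have c0: "c > 0" using eps by (simp add: c_def)
  have lamn: "\<epsilon> \<le> lam n" "lam n \<le> (1-\<epsilon>)*(1+\<epsilon>*\<phi> n)/\<phi> n" for n
    using lam[of n] by (simp_all add: Let_def \<phi>_def)
  have fixS: "T1 n (T2 n z) = z" if "z \<in> S" for z n using that unfolding S_def Fix_def by auto
  have S1: "(norm (y n - z))^2 + c * (norm (T1 n (T2 n (x n)) - T2 n (x n) + T2 n z - z))^2 \<le> (norm (x n - z))^2"
    if "z \<in> S" for n z
    using one_step(1)[OF eps conjunct1[OF alpha1[of n]] conjunct2[OF alpha1[of n]]
        conjunct1[OF alpha2[of n]] conjunct2[OF alpha2[of n]] avg1 avg2 lamn(1)[of n] lamn(2)[of n] \<phi>_def fixS[OF that]]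
    by (simp add: y_def c_def)
  have S2: "(norm (y n - z))^2 + c * (norm (T2 n (x n) - x n - T2 n z + z))^2 \<le> (norm (x n - z))^2"
    if "z \<in> S" for n z
    using one_step(2)[OF eps conjunct1[OF alpha1[of n]] conjunct2[OF alpha1[of n]]
        conjunct1[OF alpha2[of n]] conjunct2[OF alpha2[of n]] avg1 avg2 lamn(1)[of n] lamn(2)[of n] \<phi>_def fixS[OF that]]
    by (simp add: y_def c_def)
  have S3: "norm (x (Suc n) - y n) \<le> \<delta> n" for n
  proof -
    obtain z where "z \<in> S" using S_ne by blast
    show ?thesis
      using one_step(3)[OF eps conjunct1[OF alpha1[of n]] conjunct2[OF alpha1[of n]]
        conjunct1[OF alpha2[of n]] conjunct2[OF alpha2[of n]] avg1 avg2 lamn(1)[of n] lamn(2)[of n] \<phi>_def fixS[OF \<open>z \<in> S\<close>],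
        of "x n" "e2 n" "e1 n"]
      by (simp add: y_def \<delta>_def x_Suc)
  qed
  have d0: "0 \<le> \<delta> n" for n using lamn(1)[of n] eps by (simp add: \<delta>_def)
  have sd: "summable \<delta>" unfolding \<delta>_def by (rule summable_add[OF sum_e1 sum_e2])
  have fej: "norm (x (Suc n) - z) \<le> norm (x n - z) + \<delta> n" if "z \<in> S" for z n
    using fej_from_step(1)[of x n y \<delta> z "\<lambda>n. c * (norm (T2 n (x n) - x n - T2 n z + z))^2", OF S3 S2[OF that]] c0
    by simp
  have P1: "summable (\<lambda>n. (norm (T1 n (T2 n (x n)) - T2 n (x n) + T2 n z - z))^2)" if "z \<in> S" for z
  proof -
    have "summable (\<lambda>n. c * (norm (T1 n (T2 n (x n)) - T2 n (x n) + T2 n z - z))^2)"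
      by (rule summable_from_step[OF S3 S1[OF that] _ d0 sd]) (use c0 in simp)
    then show ?thesis using c0 by (simp add: summable_cmult_iff)
  qed
  have P2: "summable (\<lambda>n. (norm (T2 n (x n) - x n - T2 n z + z))^2)" if "z \<in> S" for z
  proof -
    have "summable (\<lambda>n. c * (norm (T2 n (x n) - x n - T2 n z + z))^2)"
      by (rule summable_from_step[OF S3 S2[OF that] _ d0 sd]) (use c0 in simp)
    then show ?thesis using c0 by (simp add: summable_cmult_iff)
  qed
  obtain z0 where z0: "z0 \<in> S" using S_ne by blast
  have P3: "summable (\<lambda>n. (norm (T1 n (T2 n (x n)) - x n))^2)"
  proof -
    have "summable (\<lambda>n. 2 * (norm (T1 n (T2 n (x n)) - T2 n (x n) + T2 n z0 - z0))^2 + 2 * (norm (T2 n (x n) - x n - T2 n z0 + z0))^2)"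
      using P1[OF z0] P2[OF z0] by (intro summable_add summable_mult)
    then show ?thesis
    proof (rule summable_comparison_test[rotated], intro exI allI impI)
      fix n
      define a where "a = T1 n (T2 n (x n)) - T2 n (x n) + T2 n z0 - z0"
      define b where "b = T2 n (x n) - x n - T2 n z0 + z0"
      have ab: "T1 n (T2 n (x n)) - x n = a + b" by (simp add: a_def b_def)
      have "norm (a + b) \<le> norm a + norm b" by (rule norm_triangle_ineq)
      then have "(norm (a + b))^2 \<le> (norm a + norm b)^2" by (intro power_mono) auto
      also have "\<dots> \<le> 2 * (norm a)^2 + 2 * (norm b)^2"
      proof -
        have "(norm a + norm b)^2 = 2 * (norm a)^2 + 2 * (norm b)^2 - (norm a - norm b)^2"
          by (simp add: power2_eq_square algebra_simps)
        then show ?thesis using zero_le_power2[of "norm a - norm b"] by linarith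
      qed
      finally show "norm ((norm (T1 n (T2 n (x n)) - x n))^2) \<le> 2 * (norm (T1 n (T2 n (x n)) - T2 n (x n) + T2 n z0 - z0))^2 + 2 * (norm (T2 n (x n) - x n - T2 n z0 + z0))^2"
        unfolding ab by (simp add: a_def b_def)
    qed
  qed
  have conv: "convergent (\<lambda>n. norm (x n - z))" if "z \<in> S" for z
    by (rule qf_convergent[OF fej[OF that] _ d0 sd]) simp
  obtain Bd where Bd: "\<And>n. norm (x n - z0) \<le> Bd" using convergent_bounded_real[OF conv[OF z0]] by blast
  have xB: "norm (x n) \<le> Bd + norm z0" for n
  proof -
    have "norm (x n) \<le> norm (x n - z0) + norm z0" using norm_triangle_ineq[of "x n - z0" z0] by simp
    then show ?thesis using Bd[of n] by linarith
  qed
  have P4: "(\<forall>z. weak_seq_cluster_point x z \<longrightarrow> z \<in> S) \<longrightarrow>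
           (\<exists>z\<in>S. weakly_converges x z \<and> (interior S \<noteq> {} \<longrightarrow> x \<longlonglongrightarrow> z))"
  proof (intro impI)
    assume cl: "\<forall>z. weak_seq_cluster_point x z \<longrightarrow> z \<in> S"
    obtain z where z: "z \<in> S" "weakly_converges x z"
      using opial[of x "Bd + norm z0" S] xB conv cl by blast
    have "x \<longlonglongrightarrow> z" if int: "interior S \<noteq> {}"
    proof -
      have "convergent x" by (rule fejer_interior[OF fej d0 sd int])
      then obtain w where w: "x \<longlonglongrightarrow> w" by (auto simp: convergent_def)
      then have "weakly_converges x w" by (rule strong_imp_weak)
      then have "w = z" using z(2) weak_limit_unique by blast
      then show ?thesis using w by simp
    qed
    then show "\<exists>z\<in>S. weakly_converges x z \<and> (interior S \<noteq> {} \<longrightarrow> x \<longlonglongrightarrow> z)" using z by blast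
  qed
  have clS: "closed S"
  proof -
    have "closed (Fix (\<lambda>y. T1 n (T2 n y)))" for n
    proof -
      have "continuous_on UNIV (\<lambda>y. T1 n (T2 n y))"
        using continuous_on_compose[OF avg_cont[OF avg2[of n]] continuous_on_subset[OF avg_cont[OF avg1[of n]]]]
        by (simp add: o_def)
      then show ?thesis unfolding Fix_def by (intro closed_Collect_eq continuous_on_id)
    qed
    then show ?thesis unfolding S_def by (intro closed_INT) auto
  qed
  have P5: "Liminf sequentially (\<lambda>n. ereal (infdist (x n) S)) = 0 \<longrightarrow> (\<exists>z\<in>S. x \<longlonglongrightarrow> z)"
    using fejer_dist[OF fej d0 sd clS S_ne] by blast
  show ?thesis
  proof (intro conjI)
    show "\<forall>z\<in>S. summable (\<lambda>n. (norm (T1 n (T2 n (x n)) - T2 n (x n) + T2 n z - z))\<^sup>2)"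
      using P1 by blast
    show "\<forall>z\<in>S. summable (\<lambda>n. (norm (T2 n (x n) - x n - T2 n z + z))\<^sup>2)"
      using P2 by blast
  qed (rule P3, rule P4, rule P5)
qed

end
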